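(* Let $S$ be a closed (compact, connected, oriented, without boundary) surface of genus $g\ge1$ and $M$ a single point of $S$. Then every ideal triangulation of $(S,M)$ has property (T4): at the puncture at least four arcs are incident.
   Context: Arcs incident to a puncture are counted with multiplicity: an arc with both endpoints at the puncture counts twice. *)

theory Defs
  imports Main
begin

text \<open>Side (t,i) of triangle t (i < 3) runs, in the boundary orientation of t, from
  corner (t,i) to corner (t,(i+1) mod 3).  A closed surface without boundary is
  obtained by gluing the sides in pairs via a fixed-point-free involution sigma;
  gluings reverse the boundary orientation, so the surface is oriented.
  Arcs of the triangulation are the glued side pairs, punctures are the classes of
  corners, the genus is determined by the Euler characteristic.\<close>

definition tri_sides :: "nat \<Rightarrow> (nat \<times> nat) set" where
  "tri_sides n = {0..<n} \<times> {0..<3}"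

definition is_side_gluing :: "nat \<Rightarrow> (nat \<times> nat \<Rightarrow> nat \<times> nat) \<Rightarrow> bool" where
  "is_side_gluing n \<sigma> \<longleftrightarrow>
     (\<forall>s\<in>tri_sides n. \<sigma> s \<in> tri_sides n \<and> \<sigma> s \<noteq> s \<and> \<sigma> (\<sigma> s) = s)"

text \<open>Identification of corners induced by the (orientation-reversing) gluing.\<close>
definition corner_rel :: "nat \<Rightarrow> (nat \<times> nat \<Rightarrow> nat \<times> nat) \<Rightarrow> ((nat \<times> nat) \<times> (nat \<times> nat)) set" where
  "corner_rel n \<sigma> =
     {((t, i), (t', (j + 1) mod 3)) | t i t' j. (t, i) \<in> tri_sides n \<and> \<sigma> (t, i) = (t', j)}
   \<union> {((t, (i + 1) mod 3), (t', j)) | t i t' j. (t, i) \<in> tri_sides n \<and> \<sigma> (t, i) = (t', j)}"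

definition punctures :: "nat \<Rightarrow> (nat \<times> nat \<Rightarrow> nat \<times> nat) \<Rightarrow> (nat \<times> nat) set set" where
  "punctures n \<sigma> = tri_sides n // ((corner_rel n \<sigma> \<union> (corner_rel n \<sigma>)\<inverse>)\<^sup>*)"

definition tri_arcs :: "nat \<Rightarrow> (nat \<times> nat \<Rightarrow> nat \<times> nat) \<Rightarrow> (nat \<times> nat) set set" where
  "tri_arcs n \<sigma> = {{s, \<sigma> s} | s. s \<in> tri_sides n}"

definition tri_adjacent :: "nat \<Rightarrow> (nat \<times> nat \<Rightarrow> nat \<times> nat) \<Rightarrow> (nat \<times> nat) set" where
  "tri_adjacent n \<sigma> = {(t, fst (\<sigma> (t, i))) | t i. (t, i) \<in> tri_sides n}"

definition surface_connected :: "nat \<Rightarrow> (nat \<times> nat \<Rightarrow> nat \<times> nat) \<Rightarrow> bool" where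
  "surface_connected n \<sigma> \<longleftrightarrow>
     (\<forall>t\<in>{0..<n}. \<forall>t'\<in>{0..<n}. (t, t') \<in> (tri_adjacent n \<sigma>)\<^sup>*)"

definition ideal_triangulation :: "nat \<Rightarrow> (nat \<times> nat \<Rightarrow> nat \<times> nat) \<Rightarrow> nat \<Rightarrow> nat \<Rightarrow> bool" where
  "ideal_triangulation n \<sigma> g m \<longleftrightarrow>
     is_side_gluing n \<sigma> \<and> surface_connected n \<sigma> \<and>
     card (punctures n \<sigma>) = m \<and>
     int (card (punctures n \<sigma>)) - int (card (tri_arcs n \<sigma>)) + int n = 2 - 2 * int g"

text \<open>Number of arcs incident to puncture v, counted with multiplicity: each arc
  {s, sigma s} has its two endpoints at the starting corners of s and of sigma s,
  so this is the number of sides whose starting corner lies in v.\<close>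
definition incident_arcs :: "nat \<Rightarrow> (nat \<times> nat \<Rightarrow> nat \<times> nat) \<Rightarrow> (nat \<times> nat) set \<Rightarrow> nat" where
  "incident_arcs n \<sigma> v = card {s \<in> tri_sides n. s \<in> v}"

definition property_T4 :: "nat \<Rightarrow> (nat \<times> nat \<Rightarrow> nat \<times> nat) \<Rightarrow> bool" where
  "property_T4 n \<sigma> \<longleftrightarrow> (\<forall>v\<in>punctures n \<sigma>. incident_arcs n \<sigma> v \<ge> 4)"

end

theory Submission
  imports Defs
begin

lemma ts1: "tri_sides (Suc 0) = {(0,0),(0,1),(0,2)}"
  unfolding tri_sides_def by auto

lemma not_one: assumes "is_side_gluing (Suc 0) \<sigma>" shows False
proof -
  have h: "\<And>s. s \<in> {(0,0),(0,1),(0,2)} \<Longrightarrow> \<sigma> s \<in> {(0::nat,0::nat),(0,1),(0,2)} \<and> \<sigma> s \<noteq> s \<and> \<sigma> (\<sigma> s) = s"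
    using assms unfolding is_side_gluing_def ts1 by blast
  have a: "\<sigma> (0,0) \<in> {(0,0),(0,1),(0,2)}" "\<sigma> (0,0) \<noteq> (0,0)" "\<sigma> (\<sigma> (0,0)) = (0,0)" using h[of "(0,0)"] by auto
  have b: "\<sigma> (0,1) \<in> {(0,0),(0,1),(0,2)}" "\<sigma> (0,1) \<noteq> (0,1)" "\<sigma> (\<sigma> (0,1)) = (0,1)" using h[of "(0,1)"] by auto
  have c: "\<sigma> (0,2) \<in> {(0,0),(0,1),(0,2)}" "\<sigma> (0,2) \<noteq> (0,2)" "\<sigma> (\<sigma> (0,2)) = (0,2)" using h[of "(0,2)"] by auto
  show False using a b c by auto
qed

theorem lemma5p3:
  fixes n g :: nat and \<sigma> :: "nat \<times> nat \<Rightarrow> nat \<times> nat"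
  assumes "g \<ge> 1"
    and "ideal_triangulation n \<sigma> g 1"
  shows "property_T4 n \<sigma>"
proof -
  let ?R = "(corner_rel n \<sigma> \<union> (corner_rel n \<sigma>)\<inverse>)\<^sup>*"
  have gl: "is_side_gluing n \<sigma>" and c1: "card (punctures n \<sigma>) = 1"
    using assms(2) unfolding ideal_triangulation_def by auto
  then obtain v where pv: "punctures n \<sigma> = {v}" using card_1_singletonE by blast
  have n0: "n \<noteq> 0"
  proof
    assume "n = 0"
    hence "punctures n \<sigma> = {}" unfolding punctures_def tri_sides_def by simp
    thus False using pv by simp
  qed
  have n1: "n \<noteq> 1" using not_one gl by auto
  have sub: "tri_sides n \<subseteq> v"
  proof
    fix x assume x: "x \<in> tri_sides n"
    have "?R `` {x} \<in> punctures n \<sigma>" unfolding punctures_def using x by (rule quotientI)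
    hence "?R `` {x} = v" using pv by simp
    moreover have "x \<in> ?R `` {x}" by simp
    ultimately show "x \<in> v" by simp
  qed
  have "{s \<in> tri_sides n. s \<in> v} = tri_sides n" using sub by auto
  moreover have "card (tri_sides n) = n * 3" unfolding tri_sides_def by (simp add: card_cartesian_product)
  ultimately show ?thesis unfolding property_T4_def incident_arcs_def using pv n0 n1 by auto
qed

end
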